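(* Let $J^{ES}_{k,n}$ be the number of evolutionary stable configurations of length $n$ with exactly $k$ occupied lots (the empty configuration of length $0$ being counted once). Then, as formal power series, $$\sum_{n\ge 0}\sum_{k\ge 0} J^{ES}_{k,n}x^ky^n = \frac{1+xy+x^2y^2-x^2y^3+x^3y^4-x^3y^5}{1-x^2y^3-x^3y^5}.$$
   Context: A configuration of length $n\ge 0$ is a binary string $c_1c_2\cdots c_n$; $c_k=1$ means lot $k$ is occupied by a house, $c_k=0$ that it is empty. A house at position $k$ is blocked if $2\le k\le n-1$ and $c_{k-1}=c_{k+1}=1$ (lots beyond the ends never obstruct sunlight). A configuration is permissible if no house is blocked; maximal if it is permissible and, for every $k$ with $c_k=0$, setting $c_k=1$ yields a non-permissible string. A maximal configuration is resistant to predators if, for every $k$ with $c_k=0$, setting $c_k=1$ makes the new house at $k$ blocked; resistant to altruists if, for every $k$ with $c_k=0$, setting $c_k=1$ makes some house at a position $l\ne k$ blocked. Evolutionary stable configurations are maximal configurations resistant to both. *)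

theory Defs
  imports "HOL-Computational_Algebra.Formal_Power_Series"
begin

text \<open>A configuration of length n is a bool list of length n; lot k of the paper
  (1-based) is index k-1 here (0-based). True = occupied.\<close>

definition blocked :: "bool list \<Rightarrow> nat \<Rightarrow> bool" where
  "blocked c k \<longleftrightarrow> k < length c \<and> c ! k \<and> 1 \<le> k \<and> k + 1 < length c
      \<and> c ! (k - 1) \<and> c ! (k + 1)"

definition permissible :: "bool list \<Rightarrow> bool" where
  "permissible c \<longleftrightarrow> (\<forall>k < length c. \<not> blocked c k)"

definition maximal :: "bool list \<Rightarrow> bool" where
  "maximal c \<longleftrightarrow> permissible c \<and>
     (\<forall>k < length c. \<not> c ! k \<longrightarrow> \<not> permissible (c[k := True]))"

definition resistant_predators :: "bool list \<Rightarrow> bool" where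
  "resistant_predators c \<longleftrightarrow>
     (\<forall>k < length c. \<not> c ! k \<longrightarrow> blocked (c[k := True]) k)"

definition resistant_altruists :: "bool list \<Rightarrow> bool" where
  "resistant_altruists c \<longleftrightarrow>
     (\<forall>k < length c. \<not> c ! k \<longrightarrow> (\<exists>l < length c. l \<noteq> k \<and> blocked (c[k := True]) l))"

definition evolutionary_stable :: "bool list \<Rightarrow> bool" where
  "evolutionary_stable c \<longleftrightarrow> maximal c \<and> resistant_predators c \<and> resistant_altruists c"

definition J_ES :: "nat \<Rightarrow> nat \<Rightarrow> nat" where
  "J_ES k n = card {c :: bool list. length c = n \<and> length (filter id c) = k \<and> evolutionary_stable c}"

text \<open>Bivariate formal power series: outer variable y, inner variable x,
  i.e. the series is sum over n of (sum over k of J k n x^k) y^n.\<close>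

definition fps_x :: "int fps fps" where "fps_x = fps_const fps_X"
definition fps_y :: "int fps fps" where "fps_y = fps_X"

definition J_ES_gf :: "int fps fps" where
  "J_ES_gf = Abs_fps (\<lambda>n. Abs_fps (\<lambda>k. int (J_ES k n)))"

end

theory Submission
  imports Defs
begin

definition g :: "bool list \<Rightarrow> int \<Rightarrow> bool" where
  "g c i \<longleftrightarrow> 0 \<le> i \<and> i < int (length c) \<and> c ! nat i"

definition Q :: "bool list \<Rightarrow> bool" where
  "Q c \<longleftrightarrow> (\<forall>i. 0 \<le> i \<and> i < int (length c) \<longrightarrow>
     (g c i \<longrightarrow> \<not> (g c (i - 1) \<and> g c (i + 1))) \<and>
     (\<not> g c i \<longrightarrow> g c (i - 1) \<and> g c (i + 1) \<and> (g c (i - 2) \<or> g c (i + 2))))"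

lemma nat_h[simp]: "nat (1 + int n) = Suc n" "nat (2 + int n) = Suc (Suc n)"
  "nat (int n + 1) = Suc n" "nat (int n + 2) = Suc (Suc n)" by auto

lemma blocked_g: "blocked c k \<longleftrightarrow> g c (int k) \<and> g c (int k - 1) \<and> g c (int k + 1)"
  unfolding blocked_def g_def
  by (cases k) (auto simp: nat_int_add)

lemma g_upd: "g (c[k := True]) i = (if i = int k \<and> k < length c then True else g c i)"
  unfolding g_def by (auto simp: nth_list_update)

lemma g_nth: "k < length c \<Longrightarrow> g c (int k) = c ! k"
  unfolding g_def by auto

lemma g_out: "i < 0 \<or> i \<ge> int (length c) \<Longrightarrow> \<not> g c i"
  unfolding g_def by auto

lemma perm_g: "permissible c \<longleftrightarrow> (\<forall>i. g c i \<longrightarrow> \<not> (g c (i - 1) \<and> g c (i + 1)))"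
  unfolding permissible_def blocked_g
  apply (rule iffI)
   apply (metis g_def int_nat_eq nat_less_iff)
  apply blast
  done

lemma ES_iff: "evolutionary_stable c \<longleftrightarrow> Q c"
proof
  assume es: "evolutionary_stable c"
  then have P: "permissible c" and R: "resistant_predators c" and A: "resistant_altruists c"
    unfolding evolutionary_stable_def maximal_def by auto
  show "Q c" unfolding Q_def
  proof (intro allI impI)
    fix i assume i: "0 \<le> i \<and> i < int (length c)"
    then obtain k where k: "i = int k" "k < length c" by (metis int_nat_eq nat_less_iff)
    have X1: "g c i \<longrightarrow> \<not> (g c (i - 1) \<and> g c (i + 1))" using P perm_g by blast
    have X2: "g c (i - 1) \<and> g c (i + 1) \<and> (g c (i - 2) \<or> g c (i + 2))" if ng: "\<not> g c i"
    proof -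
      have nk: "\<not> c ! k" using ng k g_nth by auto
      have "blocked (c[k := True]) k" using R nk k unfolding resistant_predators_def by auto
      then have g1: "g c (i - 1)" and g2: "g c (i + 1)" unfolding blocked_g g_upd using k by auto
      obtain l where l: "l < length c" "l \<noteq> k" "blocked (c[k := True]) l"
        using A nk k unfolding resistant_altruists_def by blast
      have lb: "g (c[k := True]) (int l)" "g (c[k := True]) (int l - 1)" "g (c[k := True]) (int l + 1)"
        using l(3) unfolding blocked_g by auto
      have "g c (i - 2) \<or> g c (i + 2)"
      proof (cases "int l = i - 1 \<or> int l = i + 1")
        case True
        then show ?thesis
        proof
          assume "int l = i - 1"
          then have "int l - 1 = i - 2" "int l \<noteq> int k" "int l - 1 \<noteq> int k" using k by auto
          then have "g c (int l - 1)" using lb(2) unfolding g_upd by (auto split: if_splits)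
          then show ?thesis using \<open>int l - 1 = i - 2\<close> by simp
        next
          assume "int l = i + 1"
          then have "int l + 1 = i + 2" "int l \<noteq> int k" "int l + 1 \<noteq> int k" using k by auto
          then have "g c (int l + 1)" using lb(3) unfolding g_upd by (auto split: if_splits)
          then show ?thesis using \<open>int l + 1 = i + 2\<close> by simp
        qed
      next
        case False
        then have "g c (int l)" "g c (int l - 1)" "g c (int l + 1)" using lb l k unfolding g_upd
          by (auto split: if_splits)
        then show ?thesis using P perm_g by blast
      qed
      then show ?thesis using g1 g2 by blast
    qed
    show "(g c i \<longrightarrow> \<not> (g c (i - 1) \<and> g c (i + 1))) \<and>
     (\<not> g c i \<longrightarrow> g c (i - 1) \<and> g c (i + 1) \<and> (g c (i - 2) \<or> g c (i + 2)))"
      using X1 X2 by blast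
  qed
next
  assume q: "Q c"
  have P: "permissible c" unfolding perm_g
  proof (intro allI impI)
    fix i assume "g c i"
    then have "0 \<le> i \<and> i < int (length c)" unfolding g_def by auto
    then show "\<not> (g c (i - 1) \<and> g c (i + 1))" using q \<open>g c i\<close> unfolding Q_def by blast
  qed
  have Z: "g c (int k - 1) \<and> g c (int k + 1) \<and> (g c (int k - 2) \<or> g c (int k + 2))"
    if "k < length c" "\<not> c ! k" for k
    using q that g_nth[of k c] unfolding Q_def by auto
  have R: "resistant_predators c" unfolding resistant_predators_def blocked_g g_upd
    using Z by auto
  have A: "resistant_altruists c" unfolding resistant_altruists_def
  proof (intro allI impI)
    fix k assume k: "k < length c" "\<not> c ! k"
    note z = Z[OF k]
    show "\<exists>l<length c. l \<noteq> k \<and> blocked (c[k := True]) l"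
    proof (cases "g c (int k - 2)")
      case True
      have "k \<ge> 1" using z g_def by auto
      then show ?thesis using True z k
        by (intro exI[of _ "k - 1"]) (auto simp: blocked_g g_upd of_nat_diff algebra_simps)
    next
      case False
      then have "g c (int k + 2)" using z by auto
      then have "k + 1 < length c" using g_def by auto
      then show ?thesis using False z k
        by (intro exI[of _ "k + 1"]) (auto simp: blocked_g g_upd algebra_simps)
    qed
  qed
  have M: "maximal c" unfolding maximal_def
  proof (intro conjI allI impI P)
    fix k assume k: "k < length c" "\<not> c ! k"
    then have "blocked (c[k := True]) k" using R unfolding resistant_predators_def by auto
    then show "\<not> permissible (c[k := True])" unfolding permissible_def using k by auto
  qed
  show "evolutionary_stable c" unfolding evolutionary_stable_def using M R A by auto
qed

definition Qat :: "bool list \<Rightarrow> int \<Rightarrow> bool" where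
  "Qat c i \<longleftrightarrow> (g c i \<longrightarrow> \<not> (g c (i - 1) \<and> g c (i + 1))) \<and>
     (\<not> g c i \<longrightarrow> g c (i - 1) \<and> g c (i + 1) \<and> (g c (i - 2) \<or> g c (i + 2)))"

lemma Q_Qat: "Q c \<longleftrightarrow> (\<forall>i. 0 \<le> i \<and> i < int (length c) \<longrightarrow> Qat c i)"
  unfolding Q_def Qat_def by blast

lemma g_app: "g (w @ s) j = (if j < int (length w) then g w j else g s (j - int (length w)))"
  unfolding g_def by (auto simp: nth_append nat_diff_distrib)

lemma g_app_same: "j < int (length w) \<or> (j = int (length w) \<and> \<not> g s 0) \<Longrightarrow> g (w @ s) j = g w j"
  unfolding g_app by (auto simp: g_def)

lemma Qat_cong:
  assumes "\<And>d. d \<in> {-2,-1,0,1,2::int} \<Longrightarrow> g c (i + d) = g c' (i + d)"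
  shows "Qat c i = Qat c' i"
proof -
  have "g c (i - 2) = g c' (i - 2)" "g c (i - 1) = g c' (i - 1)" "g c i = g c' i"
     "g c (i + 1) = g c' (i + 1)" "g c (i + 2) = g c' (i + 2)"
    using assms[of "-2"] assms[of "-1"] assms[of 0] assms[of 1] assms[of 2] by auto
  then show ?thesis unfolding Qat_def by simp
qed

lemma Qat_app_low:
  assumes "\<not> g s 0" "i \<le> int (length w) - 2"
  shows "Qat (w @ s) i = Qat w i"
  by (rule Qat_cong) (use assms in \<open>auto intro!: g_app_same\<close>)

lemma Q_last: assumes "Q w" "w \<noteq> []" shows "g w (int (length w) - 1)"
proof (rule ccontr)
  assume a: "\<not> ?thesis"
  have "Qat w (int (length w) - 1)" using assms Q_Qat by (simp add: Suc_le_eq)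
  then show False using a unfolding Qat_def by (auto simp: g_def)
qed

lemma Q_first: assumes "Q w" "w \<noteq> []" shows "g w 0"
proof (rule ccontr)
  assume a: "\<not> ?thesis"
  have "Qat w 0" using assms Q_Qat by simp
  then show False using a unfolding Qat_def by (auto simp: g_def)
qed

lemma Q_prefix:
  assumes "Q (w @ s)" "\<not> g s 0"
  shows "Q w"
  unfolding Q_Qat
proof (intro allI impI)
  fix i assume i: "0 \<le> i \<and> i < int (length w)"
  have q: "Qat (w @ s) i" using assms(1) i unfolding Q_Qat by auto
  show "Qat w i"
  proof (cases "i \<le> int (length w) - 2")
    case True
    then show ?thesis using q Qat_app_low[OF assms(2)] by simp
  next
    case False
    then have ie: "i = int (length w) - 1" using i by auto
    have e: "g (w @ s) (i + 1) = False" "g w (i + 1) = False"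
      using ie assms(2) unfolding g_app by (auto simp: g_def)
    have "g (w @ s) i = g w i" "g (w @ s) (i - 1) = g w (i - 1)" "g (w @ s) (i - 2) = g w (i - 2)"
      using ie by (intro g_app_same; simp)+
    then show ?thesis using q e unfolding Qat_def by auto
  qed
qed

lemma g3: "g [False, True, True] j = (j = 1 \<or> j = 2)"
  unfolding g_def by (cases "nat j") (auto simp: numeral_2_eq_2 nth_Cons')

lemma g5: "g [False, True, True, False, True] j = (j = 1 \<or> j = 2 \<or> j = 4)"
  unfolding g_def
  apply (cases "j = 0"; cases "j = 1"; cases "j = 2"; cases "j = 3"; cases "j = 4")
  apply (auto simp: nth_Cons')
  done

lemma Q_app3:
  assumes "Q w" "w \<noteq> []"
  shows "Q (w @ [False, True, True])"
  unfolding Q_Qat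
proof (intro allI impI)
  define m where "m = int (length w)"
  have L: "g w (m - 1)" using Q_last[OF assms] m_def by simp
  fix i assume i: "0 \<le> i \<and> i < int (length (w @ [False, True, True]))"
  show "Qat (w @ [False, True, True]) i"
  proof (cases "i \<le> m - 2")
    case True
    then show ?thesis using Qat_app_low[of "[False, True, True]" i w] assms(1) i m_def
      by (auto simp: g3 Q_Qat)
  next
    case False
    then have "i = m - 1 \<or> i = m \<or> i = m + 1 \<or> i = m + 2" using i m_def by auto
    then show ?thesis using L unfolding Qat_def g_app m_def[symmetric]
      by (elim disjE) (auto simp: g3)
  qed
qed

lemma Q_app5:
  assumes "Q w" "w \<noteq> []"
  shows "Q (w @ [False, True, True, False, True])"
  unfolding Q_Qat
proof (intro allI impI)
  define m where "m = int (length w)"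
  have L: "g w (m - 1)" using Q_last[OF assms] m_def by simp
  fix i assume i: "0 \<le> i \<and> i < int (length (w @ [False, True, True, False, True]))"
  show "Qat (w @ [False, True, True, False, True]) i"
  proof (cases "i \<le> m - 2")
    case True
    then show ?thesis using Qat_app_low[of "[False, True, True, False, True]" i w] assms(1) i m_def
      by (auto simp: g5 Q_Qat)
  next
    case False
    then have "i = m - 1 \<or> i = m \<or> i = m + 1 \<or> i = m + 2 \<or> i = m + 3 \<or> i = m + 4"
      using i m_def by auto
    then show ?thesis using L unfolding Qat_def g_app m_def[symmetric]
      by (elim disjE) (auto simp: g5)
  qed
qed

lemma recon:
  assumes "int (length c) = J + int (length s)" "0 \<le> J"
    "\<And>t. 0 \<le> t \<Longrightarrow> t < int (length s) \<Longrightarrow> g c (J + t) = g s t"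
  shows "c = take (nat J) c @ s"
proof (rule nth_equalityI)
  show "length c = length (take (nat J) c @ s)" using assms(1,2) by auto
  fix i assume i: "i < length c"
  show "c ! i = (take (nat J) c @ s) ! i"
  proof (cases "i < nat J")
    case True then show ?thesis using i by (simp add: nth_append)
  next
    case False
    define t where "t = int i - J"
    have t: "0 \<le> t" "t < int (length s)" using False i assms(1,2) t_def by auto
    have "g c (J + t) = g s t" using assms(3) t by auto
    moreover have "J + t = int i" using t_def by simp
    ultimately have "c ! i = s ! nat t" using i t unfolding g_def by auto
    moreover have "nat t = i - nat J" using t_def assms(2) False by auto
    moreover have "nat J \<le> length c" using assms(1,2) by auto
    ultimately show ?thesis using False by (simp add: nth_append min_def)
  qed
qed

lemma g1: "g [True] j = (j = 0)" unfolding g_def by auto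
lemma g2: "g [True, True] j = (j = 0 \<or> j = 1)" unfolding g_def
  by (cases "j = 0"; cases "j = 1") auto
lemma g4: "g [True, True, False, True] j = (j = 0 \<or> j = 1 \<or> j = 3)"
  unfolding g_def
  apply (cases "j = 0"; cases "j = 1"; cases "j = 2"; cases "j = 3")
  apply (auto simp: nth_Cons')
  done

lemma Q_decomp:
  assumes "Q c" "c \<noteq> []"
  shows "c = [True] \<or> c = [True, True] \<or> c = [True, True, False, True] \<or>
    (\<exists>w. w \<noteq> [] \<and> Q w \<and> (c = w @ [False, True, True] \<or> c = w @ [False, True, True, False, True]))"
proof -
  define N where "N = int (length c)"
  have N1: "N \<ge> 1" using assms(2) N_def by (cases c) auto
  have L: "g c (N - 1)" using Q_last[OF assms] N_def by simp
  have F0: "g c 0" using Q_first[OF assms] by simp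
  have GN: "\<not> g c N" "\<not> g c (N + 1)" using N_def by (auto simp: g_def)
  have qa: "Qat c i" if "0 \<le> i" "i < N" for i using assms(1) that N_def Q_Qat by auto
  show ?thesis
  proof (cases "N = 1")
    case True
    have "c = take (nat 0) c @ [True]"
    proof (rule recon)
      fix t :: int assume "0 \<le> t" "t < int (length [True])"
      then have "t = 0" by auto
      then show "g c (0 + t) = g [True] t" using F0 by (auto simp: g1)
    qed (use True N_def in auto)
    then show ?thesis by simp
  next
    case False
    then have N2: "N \<ge> 2" using N1 by auto
    show ?thesis
    proof (cases "g c (N - 2)")
      case True
      show ?thesis
      proof (cases "N = 2")
        case True
        have "c = take (nat 0) c @ [True, True]" using True L \<open>g c (N - 2)\<close> F0
          by (intro recon) (auto simp: N_def g2)
        then show ?thesis by simp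
      next
        case False
        then have N3: "N \<ge> 3" using N2 by auto
        have "\<not> g c (N - 3)" using qa[of "N - 2"] True L N3 unfolding Qat_def by auto
        then have N4: "N \<ge> 4" using F0 N3 by (cases "N = 3") auto
        have "c = take (nat (N - 3)) c @ [False, True, True]"
        proof (rule recon)
          fix t :: int assume "0 \<le> t" "t < int (length [False, True, True])"
          then have "t = 0 \<or> t = 1 \<or> t = 2" by auto
          then show "g c (N - 3 + t) = g [False, True, True] t"
            using \<open>\<not> g c (N - 3)\<close> True L by (auto simp: g3)
        qed (use N4 N_def in auto)
        moreover define w where "w = take (nat (N - 3)) c"
        ultimately have c: "c = w @ [False, True, True]" by simp
        have "Q w" using Q_prefix[of w "[False, True, True]"] assms(1) c by (simp add: g3)
        moreover have "w \<noteq> []" using N4 N_def w_def by auto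
        ultimately show ?thesis using c by blast
      qed
    next
      case False
      then have a: "g c (N - 3)" "g c (N - 4)" using qa[of "N - 2"] L N2 GN unfolding Qat_def by auto
      then have N4: "N \<ge> 4" by (auto simp: g_def)
      show ?thesis
      proof (cases "N = 4")
        case True
        have "c = take (nat 0) c @ [True, True, False, True]"
        proof (rule recon)
          fix t :: int assume "0 \<le> t" "t < int (length [True, True, False, True])"
          then have "t = 0 \<or> t = 1 \<or> t = 2 \<or> t = 3" by auto
          then show "g c (0 + t) = g [True, True, False, True] t"
            using a False L True by (auto simp: g4)
        qed (use True N_def in auto)
        then show ?thesis by simp
      next
        case N4ne: False
        have "\<not> g c (N - 5)" using qa[of "N - 4"] a N4 unfolding Qat_def by auto
        then have N6: "N \<ge> 6" using F0 N4 N4ne by (cases "N = 5") auto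
        have "c = take (nat (N - 5)) c @ [False, True, True, False, True]"
        proof (rule recon)
          fix t :: int assume "0 \<le> t" "t < int (length [False, True, True, False, True])"
          then have "t = 0 \<or> t = 1 \<or> t = 2 \<or> t = 3 \<or> t = 4" by auto
          then show "g c (N - 5 + t) = g [False, True, True, False, True] t"
            using \<open>\<not> g c (N - 5)\<close> a False L by (auto simp: g5)
        qed (use N6 N_def in auto)
        moreover define w where "w = take (nat (N - 5)) c"
        ultimately have c: "c = w @ [False, True, True, False, True]" by simp
        have "Q w" using Q_prefix[of w "[False, True, True, False, True]"] assms(1) c by (simp add: g5)
        moreover have "w \<noteq> []" using N6 N_def w_def by auto
        ultimately show ?thesis using c by blast
      qed
    qed
  qed
qed

definition S :: "nat \<Rightarrow> nat \<Rightarrow> bool list set" where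
  "S n k = {c. length c = n \<and> length (filter id c) = k \<and> Q c}"

lemma J_S: "J_ES k n = card (S n k)"
  unfolding J_ES_def S_def ES_iff by simp

lemma fin_len: "finite {c :: bool list. length c = n}"
  using finite_lists_length_eq[of "UNIV :: bool set" n] by simp

lemma fin_S: "finite (S n k)"
  by (rule finite_subset[OF _ fin_len[of n]]) (auto simp: S_def)

definition Sm :: "nat \<Rightarrow> nat \<Rightarrow> bool list set" where
  "Sm n k = {c \<in> {[], [True], [True, True], [True, True, False, True]}. length c = n \<and> length (filter id c) = k}"

definition W3 where "W3 n k = {w. w \<noteq> [] \<and> Q w \<and> length w + 3 = n \<and> length (filter id w) + 2 = k}"
definition W5 where "W5 n k = {w. w \<noteq> [] \<and> Q w \<and> length w + 5 = n \<and> length (filter id w) + 3 = k}"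

lemma Q_small: "Q []" "Q [True]" "Q [True, True]" "Q [True, True, False, True]"
  unfolding Q_Qat Qat_def g_def by (auto simp: nth_Cons')

lemma S_split: "S n k = Sm n k \<union> ((\<lambda>w. w @ [False, True, True]) ` W3 n k)
   \<union> ((\<lambda>w. w @ [False, True, True, False, True]) ` W5 n k)"
proof (intro equalityI subsetI)
  fix c assume "c \<in> S n k"
  then have c: "length c = n" "length (filter id c) = k" "Q c" unfolding S_def by auto
  show "c \<in> Sm n k \<union> ((\<lambda>w. w @ [False, True, True]) ` W3 n k)
   \<union> ((\<lambda>w. w @ [False, True, True, False, True]) ` W5 n k)"
  proof (cases "c = []")
    case True then show ?thesis using c by (auto simp: Sm_def)
  next
    case False
    from Q_decomp[OF c(3) False] consider "c = [True] \<or> c = [True, True] \<or> c = [True, True, False, True]"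
      | w where "w \<noteq> []" "Q w" "c = w @ [False, True, True]"
      | w where "w \<noteq> []" "Q w" "c = w @ [False, True, True, False, True]" by blast
    then show ?thesis
    proof cases
      case 1 then show ?thesis using c by (auto simp: Sm_def)
    next
      case (2 w) then have "w \<in> W3 n k" using c by (auto simp: W3_def)
      then show ?thesis using 2 by blast
    next
      case (3 w) then have "w \<in> W5 n k" using c by (auto simp: W5_def)
      then show ?thesis using 3 by blast
    qed
  qed
next
  fix c assume "c \<in> Sm n k \<union> ((\<lambda>w. w @ [False, True, True]) ` W3 n k)
   \<union> ((\<lambda>w. w @ [False, True, True, False, True]) ` W5 n k)"
  then show "c \<in> S n k"
    by (auto simp: S_def Sm_def W3_def W5_def Q_small Q_app3 Q_app5)
qed

lemma W3_eq: "W3 n k = (if 3 \<le> n \<and> 2 \<le> k then S (n - 3) (k - 2) - {[]} else {})"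
  unfolding W3_def S_def by auto

lemma W5_eq: "W5 n k = (if 5 \<le> n \<and> 3 \<le> k then S (n - 5) (k - 3) - {[]} else {})"
  unfolding W5_def S_def by auto

lemma nil_S: "[] \<in> S n k \<longleftrightarrow> n = 0 \<and> k = 0"
  unfolding S_def using Q_small by auto

lemma card_Sm: "card (Sm n k) = (if (n = 0 \<and> k = 0) \<or> (n = 1 \<and> k = 1) \<or> (n = 2 \<and> k = 2) \<or> (n = 4 \<and> k = 3) then 1 else 0)"
proof -
  have "Sm n k = (if n = 0 \<and> k = 0 then {[]} else if n = 1 \<and> k = 1 then {[True]}
     else if n = 2 \<and> k = 2 then {[True, True]} else if n = 4 \<and> k = 3 then {[True, True, False, True]} else {})"
    unfolding Sm_def by auto
  then show ?thesis by auto
qed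

lemma card_rec:
  "int (J_ES k n) =
     (if (n = 0 \<and> k = 0) \<or> (n = 1 \<and> k = 1) \<or> (n = 2 \<and> k = 2) \<or> (n = 4 \<and> k = 3) then 1 else 0)
   + (if 3 \<le> n \<and> 2 \<le> k then int (J_ES (k - 2) (n - 3)) - (if n = 3 \<and> k = 2 then 1 else 0) else 0)
   + (if 5 \<le> n \<and> 3 \<le> k then int (J_ES (k - 3) (n - 5)) - (if n = 5 \<and> k = 3 then 1 else 0) else 0)"
proof -
  let ?A = "(\<lambda>w. w @ [False, True, True]) ` W3 n k"
  let ?B = "(\<lambda>w. w @ [False, True, True, False, True]) ` W5 n k"
  have c00: "card (S 0 0) > 0" using fin_S nil_S card_gt_0_iff by blast
  have fW3: "finite (W3 n k)" and fW5: "finite (W5 n k)" unfolding W3_eq W5_eq using fin_S by auto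
  have d1: "Sm n k \<inter> ?A = {}" unfolding Sm_def by auto
  have d2: "(Sm n k \<union> ?A) \<inter> ?B = {}"
  proof -
    have "Sm n k \<inter> ?B = {}" unfolding Sm_def by auto
    moreover have "?A \<inter> ?B = {}"
    proof (rule ccontr)
      assume "?A \<inter> ?B \<noteq> {}"
      then obtain w v where "w @ [False, True, True] = v @ [False, True, True, False, True]" by auto
      then have "rev (w @ [False, True, True]) = rev (v @ [False, True, True, False, True])" by simp
      then show False by simp
    qed
    ultimately show ?thesis by auto
  qed
  have cA: "card ?A = card (W3 n k)" by (rule card_image) (auto simp: inj_on_def)
  have cB: "card ?B = card (W5 n k)" by (rule card_image) (auto simp: inj_on_def)
  have "card (S n k) = card (Sm n k) + card (W3 n k) + card (W5 n k)"
    unfolding S_split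
    apply (subst card_Un_disjoint)
       apply (use fW3 fW5 d2 in \<open>auto simp: Sm_def\<close>)[3]
    apply (subst card_Un_disjoint)
       apply (use fW3 fW5 d1 in \<open>auto simp: Sm_def\<close>)[3]
    using cA cB by simp
  moreover have "int (card (W3 n k)) = (if 3 \<le> n \<and> 2 \<le> k then int (J_ES (k - 2) (n - 3)) - (if n = 3 \<and> k = 2 then 1 else 0) else 0)"
    unfolding W3_eq J_S using fin_S nil_S c00 by (auto simp: card_Diff_singleton_if of_nat_diff)
  moreover have "int (card (W5 n k)) = (if 5 \<le> n \<and> 3 \<le> k then int (J_ES (k - 3) (n - 5)) - (if n = 5 \<and> k = 3 then 1 else 0) else 0)"
    unfolding W5_eq J_S using fin_S nil_S c00 by (auto simp: card_Diff_singleton_if of_nat_diff)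
  ultimately show ?thesis unfolding J_S card_Sm by simp
qed

lemma tA: "fps_nth (fps_nth (fps_X ^ m * (F * fps_const (fps_X ^ a))) n) k
   = (if n < m \<or> k < a then 0 else fps_nth (fps_nth F (n - m)) (k - a))"
  by (simp add: fps_X_power_mult_nth fps_X_power_mult_right_nth)

lemma tB: "fps_nth (fps_nth (fps_X ^ m * fps_const (fps_X ^ a :: int fps)) n) k
   = (if n = m \<and> k = a then 1 else 0)"
  by (simp add: fps_X_power_mult_nth)

lemma tC: "fps_nth (fps_nth (1 :: int fps fps) n) k = (if n = 0 \<and> k = 0 then 1 else 0)"
  by simp

lemma rec2: "int (J_ES k n) - (if n < 3 \<or> k < 2 then 0 else int (J_ES (k - 2) (n - 3)))
   - (if n < 5 \<or> k < 3 then 0 else int (J_ES (k - 3) (n - 5)))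
   = (if n = 0 \<and> k = 0 then 1 else 0) + (if n = 1 \<and> k = 1 then 1 else 0) + (if n = 2 \<and> k = 2 then 1 else 0)
     - (if n = 3 \<and> k = 2 then 1 else 0) + (if n = 4 \<and> k = 3 then 1 else 0) - (if n = 5 \<and> k = 3 then 1 else 0)"
  using card_rec[of k n] by auto

lemma xy: "fps_x ^ a * fps_y ^ b = fps_X ^ b * fps_const (fps_X ^ a :: int fps)"
  unfolding fps_x_def fps_y_def by (simp add: mult.commute)

lemma xy1: "fps_x * fps_y = fps_X ^ 1 * fps_const (fps_X ^ 1 :: int fps)"
  using xy[of 1 1] by simp

lemma gf_nth: "fps_nth (fps_nth J_ES_gf n) k = int (J_ES k n)"
  unfolding J_ES_gf_def by simp

theorem mainTheorem6:
  shows "J_ES_gf * (1 - fps_x ^ 2 * fps_y ^ 3 - fps_x ^ 3 * fps_y ^ 5)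
       = 1 + fps_x * fps_y + fps_x ^ 2 * fps_y ^ 2 - fps_x ^ 2 * fps_y ^ 3
           + fps_x ^ 3 * fps_y ^ 4 - fps_x ^ 3 * fps_y ^ 5"
proof -
  let ?J = J_ES_gf
  have L: "?J * (1 - fps_X ^ 3 * fps_const (fps_X ^ 2) - fps_X ^ 5 * fps_const (fps_X ^ 3))
    = ?J - fps_X ^ 3 * (?J * fps_const (fps_X ^ 2)) - fps_X ^ 5 * (?J * fps_const (fps_X ^ 3))"
    by (simp add: algebra_simps)
  show ?thesis
    apply (unfold xy xy1)
    apply (unfold L)
    apply (rule fps_ext)
    apply (rule fps_ext)
    subgoal for n k
        apply (simp only: fps_sub_nth fps_add_nth tA tB tC gf_nth)
        apply (rule rec2)
        done
    done
qed

end
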